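(* Let $X$ be a locale with frame presentation $\mathcal{O}X=\langle G\mid R\rangle$ and let $\overline{q}\colon\mathcal{O}(\Sigma^G)\twoheadrightarrow\mathcal{O}X$ be the quotient frame homomorphism. Equip $\mathcal{O}(\Sigma^G)$ with its Scott topology. Then the quotient topology on the set $\mathcal{O}X$ induced by the surjection $\overline{q}$ is exactly the Scott topology on $\mathcal{O}X$; that is, a subset $U\subseteq\mathcal{O}X$ is Scott-open if and only if $\overline{q}^{-1}(U)$ is Scott-open in $\mathcal{O}(\Sigma^G)$.
   Context: A frame is a complete lattice in which finite meets distribute over arbitrary joins. For a set $G$, $\mathcal{O}(\Sigma^G)$ denotes the free frame on $G$. A presentation $\mathcal{O}X=\langle G\mid R\rangle$ means $\mathcal{O}X$ is the quotient of the free frame on $G$ by the frame congruence generated by $R$; $\overline{q}$ is the corresponding surjective frame homomorphism. For a poset $L$ with directed joins, a subset $V\subseteq L$ is Scott-open if it is upward closed and whenever the join of a directed set $D$ lies in $V$, some $d\in D$ lies in $V$ (a set is directed if every finite subset has an upper bound in it). *)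

theory Defs
  imports Main
begin

definition directed_on :: "'a set \<Rightarrow> ('a \<Rightarrow> 'a \<Rightarrow> bool) \<Rightarrow> 'a set \<Rightarrow> bool" where
  "directed_on C le D \<longleftrightarrow> D \<subseteq> C \<and>
     (\<forall>F. finite F \<and> F \<subseteq> D \<longrightarrow> (\<exists>d\<in>D. \<forall>x\<in>F. le x d))"

definition is_lub_on :: "'a set \<Rightarrow> ('a \<Rightarrow> 'a \<Rightarrow> bool) \<Rightarrow> 'a set \<Rightarrow> 'a \<Rightarrow> bool" where
  "is_lub_on C le D s \<longleftrightarrow> s \<in> C \<and> (\<forall>x\<in>D. le x s) \<and>
     (\<forall>u\<in>C. (\<forall>x\<in>D. le x u) \<longrightarrow> le s u)"

definition scott_open_on :: "'a set \<Rightarrow> ('a \<Rightarrow> 'a \<Rightarrow> bool) \<Rightarrow> 'a set \<Rightarrow> bool" where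
  "scott_open_on C le V \<longleftrightarrow> V \<subseteq> C \<and>
     (\<forall>x\<in>V. \<forall>y\<in>C. le x y \<longrightarrow> y \<in> V) \<and>
     (\<forall>D s. directed_on C le D \<and> is_lub_on C le D s \<and> s \<in> V \<longrightarrow> (\<exists>d\<in>D. d \<in> V))"

definition is_frame :: "'a::complete_lattice itself \<Rightarrow> bool" where
  "is_frame _ \<longleftrightarrow> (\<forall>(a::'a) S. inf a (Sup S) = Sup ((\<lambda>s. inf a s) ` S))"

text \<open>The free frame O(Sigma^G) on G, realised concretely as the up-closed
  families of finite subsets of G, ordered by inclusion (this is the frame of
  down-sets of the free meet-semilattice Fin(G) ordered by reverse inclusion).
  Joins are unions, finite meets are intersections, the generator g is
  {F. g \<in> F}.\<close>

definition free_frame :: "'g set \<Rightarrow> 'g set set set" where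
  "free_frame G = {U. U \<subseteq> {F. finite F \<and> F \<subseteq> G} \<and>
      (\<forall>F\<in>U. \<forall>F'. finite F' \<and> F \<subseteq> F' \<and> F' \<subseteq> G \<longrightarrow> F' \<in> U)}"

definition free_frame_top :: "'g set \<Rightarrow> 'g set set" where
  "free_frame_top G = {F. finite F \<and> F \<subseteq> G}"

definition free_frame_gen :: "'g \<Rightarrow> 'g set set" where
  "free_frame_gen g = {F. finite F \<and> g \<in> F}"

definition free_frame_hom :: "'g set \<Rightarrow> ('g set set \<Rightarrow> 'a::complete_lattice) \<Rightarrow> bool" where
  "free_frame_hom G q \<longleftrightarrow>
     (\<forall>S. S \<subseteq> free_frame G \<longrightarrow> q (\<Union>S) = Sup (q ` S)) \<and>
     (\<forall>a\<in>free_frame G. \<forall>b\<in>free_frame G. q (a \<inter> b) = inf (q a) (q b)) \<and>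
     q (free_frame_top G) = top"

definition frame_congruence :: "'g set \<Rightarrow> ('g set set \<times> 'g set set) set \<Rightarrow> bool" where
  "frame_congruence G \<theta> \<longleftrightarrow> equiv (free_frame G) \<theta> \<and>
     (\<forall>a b c. (a, b) \<in> \<theta> \<and> c \<in> free_frame G \<longrightarrow> (a \<inter> c, b \<inter> c) \<in> \<theta>) \<and>
     (\<forall>P. P \<subseteq> \<theta> \<longrightarrow> (\<Union>(fst ` P), \<Union>(snd ` P)) \<in> \<theta>)"

definition generated_congruence ::
    "'g set \<Rightarrow> ('g set set \<times> 'g set set) set \<Rightarrow> ('g set set \<times> 'g set set) set" where
  "generated_congruence G R = \<Inter>{\<theta>. frame_congruence G \<theta> \<and> R \<subseteq> \<theta>}"

definition is_presentation ::
    "'g set \<Rightarrow> ('g set set \<times> 'g set set) set \<Rightarrow> ('g set set \<Rightarrow> 'a::complete_lattice) \<Rightarrow> bool" where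
  "is_presentation G R q \<longleftrightarrow>
     R \<subseteq> free_frame G \<times> free_frame G \<and>
     free_frame_hom G q \<and> q ` free_frame G = UNIV \<and>
     {(a, b). a \<in> free_frame G \<and> b \<in> free_frame G \<and> q a = q b} = generated_congruence G R"

end

theory Submission
  imports Defs
begin

lemma ff_Union: "S \<subseteq> free_frame G \<Longrightarrow> \<Union>S \<in> free_frame G"
  unfolding free_frame_def by blast

lemma ff_Un: "a \<in> free_frame G \<Longrightarrow> b \<in> free_frame G \<Longrightarrow> a \<union> b \<in> free_frame G"
  using ff_Union[of "{a,b}" G] by simp

lemma ff_lub: "D \<subseteq> free_frame G \<Longrightarrow> is_lub_on (free_frame G) (\<subseteq>) D s \<Longrightarrow> s = \<Union>D"
  unfolding is_lub_on_def using ff_Union[of D G] by (intro subset_antisym) blast+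

lemma ff_lub2: "D \<subseteq> free_frame G \<Longrightarrow> is_lub_on (free_frame G) (\<subseteq>) D (\<Union>D)"
  unfolding is_lub_on_def using ff_Union[of D G] by blast

lemma univ_lub: "is_lub_on UNIV (\<le>) D (s::'a::complete_lattice) \<Longrightarrow> s = Sup D"
proof -
  assume h: "is_lub_on UNIV (\<le>) D s"
  have "\<forall>x\<in>D. x \<le> s" using h unfolding is_lub_on_def by blast
  then have 1: "Sup D \<le> s" by (simp add: Sup_le_iff)
  have "\<forall>x\<in>D. x \<le> Sup D" by (simp add: Sup_upper)
  then have 2: "s \<le> Sup D" using h unfolding is_lub_on_def by blast
  show ?thesis using 1 2 by (rule antisym[rotated])
qed

lemma univ_lub2: "is_lub_on UNIV (\<le>) D (Sup D::'a::complete_lattice)"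
  unfolding is_lub_on_def
proof (intro conjI ballI impI)
  show "Sup D \<in> UNIV" by (rule UNIV_I)
next
  fix x assume "x \<in> D" then show "x \<le> Sup D" by (rule Sup_upper)
next
  fix u assume "\<forall>x\<in>D. x \<le> u" then show "Sup D \<le> u" by (simp add: Sup_le_iff)
qed

lemma hom_Un:
  assumes "free_frame_hom G q" "a \<in> free_frame G" "b \<in> free_frame G"
  shows "q (a \<union> b) = sup (q a) (q b)"
proof -
  have "\<forall>S. S \<subseteq> free_frame G \<longrightarrow> q (\<Union>S) = Sup (q ` S)" using assms(1) unfolding free_frame_hom_def by (rule conjunct1)
  moreover have "{a,b} \<subseteq> free_frame G" using assms(2,3) by simp
  ultimately have "q (\<Union>{a,b}) = Sup (q ` {a,b})" by blast
  thus ?thesis by simp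
qed

lemma hom_mono:
  assumes "free_frame_hom G q" "a \<in> free_frame G" "b \<in> free_frame G" "a \<subseteq> b"
  shows "q a \<le> q b"
proof -
  have "q b = sup (q a) (q b)" using hom_Un[OF assms(1-3)] assms(4)
    by (metis sup.absorb2)
  thus ?thesis by (metis sup.cobounded1)
qed

lemma so_up: "scott_open_on C le V \<Longrightarrow> x\<in>V \<Longrightarrow> y\<in>C \<Longrightarrow> le x y \<Longrightarrow> y\<in>V"
  unfolding scott_open_on_def by blast

lemma so_dir: "scott_open_on C le V \<Longrightarrow> directed_on C le D \<Longrightarrow> is_lub_on C le D s \<Longrightarrow> s\<in>V \<Longrightarrow> \<exists>d\<in>D. d\<in>V"
  unfolding scott_open_on_def by blast

theorem mainTheorem3:
  fixes G :: "'g set"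
    and R :: "('g set set \<times> 'g set set) set"
    and q :: "'g set set \<Rightarrow> 'a::complete_lattice"
  assumes "is_frame TYPE('a)"
    and "is_presentation G R q"
  shows "\<forall>U :: 'a set. scott_open_on UNIV (\<le>) U \<longleftrightarrow>
           scott_open_on (free_frame G) (\<subseteq>) (free_frame G \<inter> q -` U)"
proof (intro allI iffI)
  have hom: "free_frame_hom G q" and sur: "q ` free_frame G = UNIV"
    using assms(2) unfolding is_presentation_def by auto
  have hSup: "\<And>S. S \<subseteq> free_frame G \<Longrightarrow> q (\<Union>S) = Sup (q ` S)"
    using hom unfolding free_frame_hom_def by blast
  have pre: "\<And>x. \<exists>a\<in>free_frame G. q a = x" using sur by (metis imageE UNIV_I)
  fix U :: "'a set"
  {
    assume U: "scott_open_on UNIV (\<le>) U"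
    show "scott_open_on (free_frame G) (\<subseteq>) (free_frame G \<inter> q -` U)"
      unfolding scott_open_on_def
    proof (intro conjI allI impI ballI)
      show "free_frame G \<inter> q -` U \<subseteq> free_frame G" by blast
    next
      fix x y assume x: "x \<in> free_frame G \<inter> q -` U" and y: "y \<in> free_frame G" and "x \<subseteq> y"
      then have "q x \<le> q y" using hom_mono[OF hom] by blast
      then show "y \<in> free_frame G \<inter> q -` U" using so_up[OF U, of "q x" "q y"] x y by blast
    next
      fix D s assume a: "directed_on (free_frame G) (\<subseteq>) D \<and> is_lub_on (free_frame G) (\<subseteq>) D s \<and>
            s \<in> free_frame G \<inter> q -` U"
      have Dsub: "D \<subseteq> free_frame G" using a unfolding directed_on_def by blast
      have s: "s = \<Union>D" using ff_lub[OF Dsub] a by blast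
      have qs: "q s = Sup (q ` D)" using s hSup Dsub by blast
      have dir: "directed_on UNIV (\<le>) (q ` D)" unfolding directed_on_def
      proof (intro conjI allI impI)
        fix F assume F: "finite F \<and> F \<subseteq> q ` D"
        then obtain F' where F': "F' \<subseteq> D" "F = q ` F'" "finite F'"
          by (meson finite_subset_image)
        moreover have "\<forall>F. finite F \<and> F \<subseteq> D \<longrightarrow> (\<exists>d\<in>D. \<forall>x\<in>F. x \<subseteq> d)"
          using a unfolding directed_on_def by simp
        ultimately have "\<exists>d\<in>D. \<forall>x\<in>F'. x \<subseteq> d" using F'(1,3) by blast
        then obtain d where d: "d \<in> D" "\<forall>x\<in>F'. x \<subseteq> d" by blast
        have "\<forall>x\<in>F. x \<le> q d" proof
          fix x assume "x \<in> F"
          then obtain y where y: "y \<in> F'" "x = q y" using F' by blast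
          then show "x \<le> q d" using hom_mono[OF hom, of y d] F'(1) d Dsub by blast
        qed
        then show "\<exists>d\<in>q ` D. \<forall>x\<in>F. x \<le> d" using d by blast
      qed simp
      have "q s \<in> U" using a by blast
      then have "Sup (q ` D) \<in> U" using qs by simp
      then obtain e where "e \<in> q ` D" "e \<in> U"
        using so_dir[OF U dir univ_lub2[of "q ` D"]] by blast
      then show "\<exists>d\<in>D. d \<in> free_frame G \<inter> q -` U" using Dsub by blast
    qed
  }
  {
    assume V: "scott_open_on (free_frame G) (\<subseteq>) (free_frame G \<inter> q -` U)"
    show "scott_open_on UNIV (\<le>) U"
      unfolding scott_open_on_def
    proof (intro conjI allI impI ballI)
      show "U \<subseteq> UNIV" by simp
    next
      fix x y :: 'a assume x: "x \<in> U" and "x \<le> y"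
      obtain a where a: "a \<in> free_frame G" "q a = x" using pre by blast
      obtain b where b: "b \<in> free_frame G" "q b = y" using pre by blast
      have ab: "a \<union> b \<in> free_frame G" using ff_Un a b by blast
      have "q (a \<union> b) = y" using hom_Un[OF hom a(1) b(1)] a b \<open>x \<le> y\<close> by (simp add: sup.absorb2)
      moreover have "a \<union> b \<in> free_frame G \<inter> q -` U"
        using so_up[OF V, of a "a \<union> b"] a x ab by blast
      ultimately show "y \<in> U" by blast
    next
      fix D s assume h: "directed_on UNIV (\<le>) D \<and> is_lub_on UNIV (\<le>) D (s::'a) \<and> s \<in> U"
      define D' where "D' = {a \<in> free_frame G. q a \<in> D}"
      have D'sub: "D' \<subseteq> free_frame G" unfolding D'_def by blast
      have qD': "q ` D' = D"
      proof
        show "q ` D' \<subseteq> D" unfolding D'_def by blast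
      next
        show "D \<subseteq> q ` D'"
        proof
          fix x assume "x \<in> D"
          obtain a where "a \<in> free_frame G" "q a = x" using pre by blast
          then show "x \<in> q ` D'" unfolding D'_def using \<open>x \<in> D\<close> by blast
        qed
      qed
      have dir: "directed_on (free_frame G) (\<subseteq>) D'" unfolding directed_on_def
      proof (intro conjI allI impI)
        show "D' \<subseteq> free_frame G" by (rule D'sub)
      next
        fix F assume F: "finite F \<and> F \<subseteq> D'"
        then have fin: "finite (q ` F) \<and> q ` F \<subseteq> D" unfolding D'_def by blast
        have dD: "\<forall>F. finite F \<and> F \<subseteq> D \<longrightarrow> (\<exists>d\<in>D. \<forall>x\<in>F. x \<le> d)"
          using h unfolding directed_on_def by simp
        have "\<exists>d\<in>D. \<forall>x\<in>q ` F. x \<le> d" using dD[rule_format, OF fin] .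
        then obtain d where d: "d \<in> D" "\<forall>x\<in>q ` F. x \<le> d" by blast
        obtain a where a: "a \<in> free_frame G" "q a = d" using pre by blast
        have FU: "\<Union>F \<in> free_frame G" using ff_Union F D'sub by blast
        have "q (\<Union>F) = Sup (q ` F)" using F D'sub by (intro hSup) blast
        also have "\<dots> \<le> d" using d by (auto intro!: Sup_least)
        finally have "q (a \<union> \<Union>F) = d" using hom_Un[OF hom a(1) FU] a by (simp add: sup.absorb1)
        moreover have "a \<union> \<Union>F \<in> free_frame G" using ff_Un a FU by blast
        ultimately have "a \<union> \<Union>F \<in> D'" unfolding D'_def using d by blast
        moreover have "\<forall>x\<in>F. x \<subseteq> a \<union> \<Union>F" by auto
        ultimately show "\<exists>d\<in>D'. \<forall>x\<in>F. x \<subseteq> d" by (rule bexI[rotated])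
      qed
      have "s = Sup D" using univ_lub h by blast
      also have "\<dots> = q (\<Union>D')" using hSup[OF D'sub] qD' by simp
      finally have "\<Union>D' \<in> free_frame G \<inter> q -` U" using h ff_Union[OF D'sub] by simp
      then obtain a where "a \<in> D'" "a \<in> free_frame G \<inter> q -` U"
        using so_dir[OF V dir ff_lub2[OF D'sub]] by blast
      then show "\<exists>d\<in>D. d \<in> U" unfolding D'_def by blast
    qed
  }
qed

end
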